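(* Let $(A,B)$ be a weakly non-singular pair in $\mathrm{Sp}(n,1)$ with associated points $p=(p_1,\dots,p_{2n})$. Suppose $\mathbf p=(\mathbf p_1,\dots,\mathbf p_{2n})$ is a lift of $p$ whose Gram matrix $G(\mathbf p)=(\langle\mathbf p_i,\mathbf p_j\rangle)$ is normalized, and let $\mathbf p'=(\mathbf p_1\lambda_1,\dots,\mathbf p_{2n}\lambda_{2n})$, $\lambda_i\in\mathbb H\setminus\{0\}$, be another lift of $p$ whose Gram matrix $G(\mathbf p')$ is also normalized. Then $\lambda_1=\lambda_2=\dots=\lambda_{2n}$ and $\lambda_1\in\mathrm{Sp}(1)$ (i.e. $|\lambda_1|=1$).
   Context: $\mathbb H^{n,1}$: right $\mathbb H$-vector space $\mathbb H^{n+1}$ with Hermitian form $\langle\mathbf z,\mathbf w\rangle=\mathbf w^*H\mathbf z=\bar w_{n+1}z_1+\bar w_2z_2+\dots+\bar w_nz_n+\bar w_1z_{n+1}$ (so $\langle\mathbf z\lambda,\mathbf w\mu\rangle=\bar\mu\langle\mathbf z,\mathbf w\rangle\lambda$); $\mathrm{Sp}(n,1)$ preserves it. A loxodromic $A$ (exactly two fixed points on the boundary $\partial\mathbf H^n_{\mathbb H}$ = projectivized null vectors, no real eigenvalue) has null eigenvectors $\mathbf a_A,\mathbf r_A$ (attracting/repelling fixed points $a_A,r_A$) and positive eigenvectors $\mathbf x_{j,A}$, $1\le j\le n-1$, spanning the eigenspaces of the remaining right-eigenvalue classes (points $x_{j,A}$). A weakly non-singular pair is a pair of regular loxodromics without common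 fixed point satisfying a flag genericity condition which guarantees, after reindexing, that for $1\le k\le n-2$: $\langle\mathbf x_{k,A},\mathbf a_B\rangle,\langle\mathbf x_{k,B},\mathbf a_A\rangle,\langle\mathbf r_A,\mathbf x_{k,B}\rangle,\langle\mathbf r_B,\mathbf x_{k,A}\rangle\ne0$. Associated points: $p_1=a_A,p_2=r_A,p_3=a_B,p_4=r_B$, $p_j=x_{j-4,A}$ ($5\le j\le n+2$), $p_k=x_{k-(n+2),B}$ ($n+3\le k\le 2n$). The Gram matrix $(g_{ij})$, $g_{ij}=\langle\mathbf p_i,\mathbf p_j\rangle$, is normalized if $g_{12}=g_{13}=g_{14}=1$, $|g_{23}|=1$, $g_{1k}=1$ for $n+3\le k\le 2n$, and $g_{3j}=1$ for $5\le j\le n+2$ (equivalently $\langle\mathbf a_A,\mathbf r_A\rangle=\langle\mathbf a_A,\mathbf a_B\rangle=\langle\mathbf a_A,\mathbf r_B\rangle=\langle\mathbf a_A,\mathbf x_{k,B}\rangle=\langle\mathbf a_B,\mathbf x_{k,A}\rangle=1$, $|\langle\mathbf a_B,\mathbf r_A\rangle|=1$). *)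

theory Defs
  imports Main "HOL-Analysis.Analysis"
begin

datatype quat = Quat (qr: real) (qi: real) (qj: real) (qk: real)

lemma quat_eqI: "qr x = qr y \<Longrightarrow> qi x = qi y \<Longrightarrow> qj x = qj y \<Longrightarrow> qk x = qk y \<Longrightarrow> x = y"
  by (cases x, cases y) simp

instantiation quat :: ring_1
begin
definition "0 = Quat 0 0 0 0"
definition "1 = Quat 1 0 0 0"
definition "x + y = Quat (qr x + qr y) (qi x + qi y) (qj x + qj y) (qk x + qk y)"
definition "x - y = Quat (qr x - qr y) (qi x - qi y) (qj x - qj y) (qk x - qk y)"
definition "- x = Quat (- qr x) (- qi x) (- qj x) (- qk x)"
definition "x * y = Quat
   (qr x * qr y - qi x * qi y - qj x * qj y - qk x * qk y)
   (qr x * qi y + qi x * qr y + qj x * qk y - qk x * qj y)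
   (qr x * qj y - qi x * qk y + qj x * qr y + qk x * qi y)
   (qr x * qk y + qi x * qj y - qj x * qi y + qk x * qr y)"
instance
  by standard (auto intro!: quat_eqI simp: zero_quat_def one_quat_def plus_quat_def
      minus_quat_def uminus_quat_def times_quat_def algebra_simps)
end

definition qcnj :: "quat \<Rightarrow> quat" where
  "qcnj x = Quat (qr x) (- qi x) (- qj x) (- qk x)"

definition qabs :: "quat \<Rightarrow> real" where
  "qabs x = sqrt ((qr x)\<^sup>2 + (qi x)\<^sup>2 + (qj x)\<^sup>2 + (qk x)\<^sup>2)"

definition qreal :: "quat \<Rightarrow> bool" where
  "qreal x \<longleftrightarrow> qi x = 0 \<and> qj x = 0 \<and> qk x = 0"

text \<open>Similarity class of a quaternion: all \<open>q \<mu> q\<^sup>-\<^sup>1\<close>, i.e. all \<open>\<nu>\<close> with \<open>\<nu> q = q \<mu>\<close>, \<open>q \<noteq> 0\<close>.\<close>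
definition qclass :: "quat \<Rightarrow> quat set" where
  "qclass \<mu> = {\<nu>. \<exists>q. q \<noteq> 0 \<and> \<nu> * q = q * \<mu>}"

text \<open>Vectors of \<open>\<bbbH>\<^sup>n\<^sup>+\<^sup>1\<close> are functions \<open>nat \<Rightarrow> quat\<close> supported on the coordinates \<open>1..n+1\<close>;
  matrices are functions \<open>nat \<Rightarrow> nat \<Rightarrow> quat\<close> (only entries in \<open>{1..n+1}\<^sup>2\<close> matter).\<close>
type_synonym qvec = "nat \<Rightarrow> quat"
type_synonym qmat = "nat \<Rightarrow> nat \<Rightarrow> quat"

definition qvecs :: "nat \<Rightarrow> qvec set" where
  "qvecs n = {z. \<forall>i. i \<notin> {1..n+1} \<longrightarrow> z i = 0}"

definition rmult :: "qvec \<Rightarrow> quat \<Rightarrow> qvec" where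
  "rmult z l = (\<lambda>i. z i * l)"

definition mat_app :: "nat \<Rightarrow> qmat \<Rightarrow> qvec \<Rightarrow> qvec" where
  "mat_app n M z = (\<lambda>i. if i \<in> {1..n+1} then (\<Sum>j=1..n+1. M i j * z j) else 0)"

definition hform :: "nat \<Rightarrow> qvec \<Rightarrow> qvec \<Rightarrow> quat" where
  "hform n z w = qcnj (w (n+1)) * z 1 + (\<Sum>i=2..n. qcnj (w i) * z i) + qcnj (w 1) * z (n+1)"

definition in_Sp :: "nat \<Rightarrow> qmat \<Rightarrow> bool" where
  "in_Sp n A \<longleftrightarrow> bij_betw (mat_app n A) (qvecs n) (qvecs n) \<and>
     (\<forall>z\<in>qvecs n. \<forall>w\<in>qvecs n. hform n (mat_app n A z) (mat_app n A w) = hform n z w)"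

definition same_pt :: "nat \<Rightarrow> qvec \<Rightarrow> qvec \<Rightarrow> bool" where
  "same_pt n v w \<longleftrightarrow> v \<in> qvecs n \<and> v \<noteq> (\<lambda>_. 0) \<and> (\<exists>l. l \<noteq> 0 \<and> w = rmult v l)"

definition reig :: "nat \<Rightarrow> qmat \<Rightarrow> qvec \<Rightarrow> quat \<Rightarrow> bool" where
  "reig n A v \<mu> \<longleftrightarrow> v \<in> qvecs n \<and> v \<noteq> (\<lambda>_. 0) \<and> mat_app n A v = rmult v \<mu>"

definition null_vec :: "nat \<Rightarrow> qvec \<Rightarrow> bool" where
  "null_vec n v \<longleftrightarrow> v \<in> qvecs n \<and> v \<noteq> (\<lambda>_. 0) \<and> hform n v v = 0"

definition pos_vec :: "nat \<Rightarrow> qvec \<Rightarrow> bool" where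
  "pos_vec n v \<longleftrightarrow> v \<in> qvecs n \<and> qr (hform n v v) > 0"

text \<open>Loxodromic: exactly two fixed points on the boundary (projectivised null eigenvectors)
  and no real right eigenvalue.\<close>
definition loxodromic :: "nat \<Rightarrow> qmat \<Rightarrow> bool" where
  "loxodromic n A \<longleftrightarrow> in_Sp n A \<and>
     (\<exists>a r \<mu> \<nu>. null_vec n a \<and> reig n A a \<mu> \<and> null_vec n r \<and> reig n A r \<nu> \<and>
        \<not> same_pt n a r \<and>
        (\<forall>v \<kappa>. null_vec n v \<and> reig n A v \<kappa> \<longrightarrow> same_pt n a v \<or> same_pt n r v)) \<and>
     \<not> (\<exists>v \<mu>. reig n A v \<mu> \<and> qreal \<mu>)"

definition regular_lox :: "nat \<Rightarrow> qmat \<Rightarrow> bool" where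
  "regular_lox n A \<longleftrightarrow> loxodromic n A \<and>
     card {qclass \<mu> | \<mu>. \<exists>v. reig n A v \<mu>} = n + 1"

definition lox_data :: "nat \<Rightarrow> qmat \<Rightarrow> qvec \<Rightarrow> qvec \<Rightarrow> (nat \<Rightarrow> qvec) \<Rightarrow> bool" where
  "lox_data n A a r x \<longleftrightarrow> regular_lox n A \<and>
     null_vec n a \<and> (\<exists>\<mu>. reig n A a \<mu> \<and> qabs \<mu> > 1) \<and>
     null_vec n r \<and> (\<exists>\<mu>. reig n A r \<mu> \<and> qabs \<mu> < 1) \<and>
     (\<forall>j\<in>{1..n-1}. pos_vec n (x j) \<and> (\<exists>\<mu>. reig n A (x j) \<mu>)) \<and>
     (\<forall>j\<in>{1..n-1}. \<forall>k\<in>{1..n-1}. \<forall>\<mu> \<nu>. j \<noteq> k \<and> reig n A (x j) \<mu> \<and> reig n A (x k) \<nu>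
         \<longrightarrow> qclass \<mu> \<noteq> qclass \<nu>)"

text \<open>Weakly non-singular pair (with eigen-data, indexed after the reindexing guaranteed by the
  flag genericity condition): regular loxodromics without common boundary fixed point, and the
  listed inner products are nonzero for \<open>1 \<le> k \<le> n-2\<close>.\<close>
definition weakly_nonsingular ::
  "nat \<Rightarrow> qmat \<Rightarrow> qmat \<Rightarrow> qvec \<Rightarrow> qvec \<Rightarrow> (nat \<Rightarrow> qvec) \<Rightarrow> qvec \<Rightarrow> qvec \<Rightarrow> (nat \<Rightarrow> qvec) \<Rightarrow> bool"
  where
  "weakly_nonsingular n A B aA rA xA aB rB xB \<longleftrightarrow>
     lox_data n A aA rA xA \<and> lox_data n B aB rB xB \<and>
     \<not> same_pt n aA aB \<and> \<not> same_pt n aA rB \<and> \<not> same_pt n rA aB \<and> \<not> same_pt n rA rB \<and>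
     (\<forall>k\<in>{1..n-2}. hform n (xA k) aB \<noteq> 0 \<and> hform n (xB k) aA \<noteq> 0 \<and>
                    hform n rA (xB k) \<noteq> 0 \<and> hform n rB (xA k) \<noteq> 0)"

definition assoc_vec ::
  "nat \<Rightarrow> qvec \<Rightarrow> qvec \<Rightarrow> (nat \<Rightarrow> qvec) \<Rightarrow> qvec \<Rightarrow> qvec \<Rightarrow> (nat \<Rightarrow> qvec) \<Rightarrow> nat \<Rightarrow> qvec" where
  "assoc_vec n aA rA xA aB rB xB i =
     (if i = 1 then aA else if i = 2 then rA else if i = 3 then aB else if i = 4 then rB
      else if i \<le> n + 2 then xA (i - 4) else xB (i - (n + 2)))"

definition is_lift :: "nat \<Rightarrow> (nat \<Rightarrow> qvec) \<Rightarrow> (nat \<Rightarrow> qvec) \<Rightarrow> bool" where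
  "is_lift n p P \<longleftrightarrow> (\<forall>i\<in>{1..2*n}. same_pt n (p i) (P i))"

definition gram :: "nat \<Rightarrow> (nat \<Rightarrow> qvec) \<Rightarrow> nat \<Rightarrow> nat \<Rightarrow> quat" where
  "gram n P i j = hform n (P i) (P j)"

definition normalized_gram :: "nat \<Rightarrow> (nat \<Rightarrow> qvec) \<Rightarrow> bool" where
  "normalized_gram n P \<longleftrightarrow>
     gram n P 1 2 = 1 \<and> gram n P 1 3 = 1 \<and> gram n P 1 4 = 1 \<and> qabs (gram n P 2 3) = 1 \<and>
     (\<forall>k\<in>{n+3..2*n}. gram n P 1 k = 1) \<and> (\<forall>j\<in>{5..n+2}. gram n P 3 j = 1)"

end

theory Submission
  imports Defs
begin

definition qN :: "quat \<Rightarrow> real" where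
  "qN x = (qr x)\<^sup>2 + (qi x)\<^sup>2 + (qj x)\<^sup>2 + (qk x)\<^sup>2"

lemma qcnj_mult: "qcnj (x * y) = qcnj y * qcnj x"
  by (rule quat_eqI) (simp_all add: qcnj_def times_quat_def algebra_simps)

lemma qcnj_qcnj: "qcnj (qcnj x) = x"
  by (rule quat_eqI) (simp_all add: qcnj_def)

lemma qcnj_add: "qcnj (x + y) = qcnj x + qcnj y"
  by (rule quat_eqI) (simp_all add: qcnj_def plus_quat_def)

lemma qcnj_one: "qcnj 1 = 1"
  by (rule quat_eqI) (simp_all add: qcnj_def one_quat_def)

lemma mult_cnj: "x * qcnj x = Quat (qN x) 0 0 0"
  by (rule quat_eqI) (simp_all add: qcnj_def times_quat_def qN_def power2_eq_square algebra_simps)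

lemma cnj_mult: "qcnj x * x = Quat (qN x) 0 0 0"
  by (rule quat_eqI) (simp_all add: qcnj_def times_quat_def qN_def power2_eq_square algebra_simps)

lemma sc_mult: "Quat r 0 0 0 * b = Quat (r * qr b) (r * qi b) (r * qj b) (r * qk b)"
  by (simp add: times_quat_def)

lemma qN_mult: "qN (x * y) = qN x * qN y"
  unfolding qN_def times_quat_def by (simp add: power2_eq_square algebra_simps)

lemma qN_nonneg: "qN x \<ge> 0" unfolding qN_def by simp

lemma qabs_qN: "qabs x = sqrt (qN x)" unfolding qabs_def qN_def by simp

lemma qabs_mult: "qabs (x * y) = qabs x * qabs y"
  by (simp add: qabs_qN qN_mult real_sqrt_mult)

lemma qabs_cnj: "qabs (qcnj x) = qabs x"
  by (simp add: qabs_def qcnj_def)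

lemma key:
  assumes "qcnj a * b = 1" shows "b * qcnj a = 1"
proof -
  have "a * (qcnj a * b) = a" using assms by simp
  hence e: "Quat (qN a) 0 0 0 * b = a" by (simp add: mult.assoc[symmetric] mult_cnj)
  have "qN a \<noteq> 0"
  proof
    assume "qN a = 0"
    hence "a = 0" using e by (simp add: sc_mult zero_quat_def)
    thus False using assms by (simp add: qcnj_def zero_quat_def times_quat_def one_quat_def)
  qed
  have c1: "qr a = qN a * qr b" using arg_cong[OF e, of qr] by (simp add: sc_mult)
  have c2: "qi a = qN a * qi b" using arg_cong[OF e, of qi] by (simp add: sc_mult)
  have c3: "qj a = qN a * qj b" using arg_cong[OF e, of qj] by (simp add: sc_mult)
  have c4: "qk a = qN a * qk b" using arg_cong[OF e, of qk] by (simp add: sc_mult)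
  have b: "b = Quat (qr a / qN a) (qi a / qN a) (qj a / qN a) (qk a / qN a)"
    using \<open>qN a \<noteq> 0\<close> by (intro quat_eqI) (simp_all add: c1 c2 c3 c4)
  have b2: "b = Quat (1 / qN a) 0 0 0 * a"
    unfolding b by (intro quat_eqI) (simp_all add: sc_mult)
  have "b * qcnj a = Quat (1 / qN a) 0 0 0 * (a * qcnj a)"
    unfolding b2 by (simp add: mult.assoc)
  also have "\<dots> = 1" using \<open>qN a \<noteq> 0\<close>
    by (simp add: mult_cnj sc_mult one_quat_def)
  finally show ?thesis .
qed

lemma uniq:
  assumes "qcnj a * b = 1" "qcnj c * b = 1" shows "a = c"
proof -
  have "qcnj c = qcnj c * (b * qcnj a)" using key[OF assms(1)] by simp
  also have "\<dots> = qcnj a" using assms(2) by (simp add: mult.assoc[symmetric])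
  finally show ?thesis by (metis qcnj_qcnj)
qed

lemma cancel:
  assumes "qcnj a * b = 1" "qcnj a * c = 1" shows "b = c"
proof -
  have "c = c * (qcnj a * b)" using assms(1) by simp
  also have "\<dots> = b" using key[OF assms(2)] by (simp add: mult.assoc[symmetric])
  finally show ?thesis by simp
qed

lemma hform_rmult: "hform n (rmult z a) (rmult w b) = qcnj b * hform n z w * a"
  unfolding hform_def rmult_def
  by (simp add: qcnj_mult sum_distrib_left sum_distrib_right mult.assoc distrib_left distrib_right)

lemma gram_rmult: "gram n (\<lambda>i. rmult (P i) (l i)) i j = qcnj (l j) * gram n P i j * l i"
  unfolding gram_def by (simp add: hform_rmult)

theorem mainTheorem7:
  fixes n :: nat and A B :: qmat and aA rA aB rB :: qvec and xA xB :: "nat \<Rightarrow> qvec"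
    and P :: "nat \<Rightarrow> qvec" and l :: "nat \<Rightarrow> quat"
  assumes "n \<ge> 2"
    and "weakly_nonsingular n A B aA rA xA aB rB xB"
    and "is_lift n (assoc_vec n aA rA xA aB rB xB) P"
    and "normalized_gram n P"
    and "\<forall>i\<in>{1..2*n}. l i \<noteq> 0"
    and "is_lift n (assoc_vec n aA rA xA aB rB xB) (\<lambda>i. rmult (P i) (l i))"
    and "normalized_gram n (\<lambda>i. rmult (P i) (l i))"
  shows "(\<forall>i\<in>{1..2*n}. l i = l 1) \<and> qabs (l 1) = 1"
proof -
  note N = assms(4)[unfolded normalized_gram_def] assms(7)[unfolded normalized_gram_def gram_rmult]
  have h2: "qcnj (l 2) * l 1 = 1" using N by simp
  have h3: "qcnj (l 3) * l 1 = 1" using N by simp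
  have h4: "qcnj (l 4) * l 1 = 1" using N by simp
  have hk: "qcnj (l k) * l 1 = 1" if "k \<in> {n+3..2*n}" for k using N that by auto
  have hj: "qcnj (l j) * l 3 = 1" if "j \<in> {5..n+2}" for j using N that by auto
  have e3: "l 3 = l 2" using uniq[OF h3 h2] .
  have e4: "l 4 = l 2" using uniq[OF h4 h2] .
  have ek: "l k = l 2" if "k \<in> {n+3..2*n}" for k using uniq[OF hk[OF that] h2] .
  have "qabs (qcnj (l 3) * gram n P 2 3 * l 2) = 1" using N by simp
  hence "qabs (l 2) * qabs (l 2) = 1" using N by (simp add: qabs_mult qabs_cnj e3)
  moreover have "qabs (l 2) \<ge> 0" by (simp add: qabs_def)
  ultimately have a2: "qabs (l 2) = 1"
  proof -
    assume h: "qabs (l 2) * qabs (l 2) = 1" "qabs (l 2) \<ge> 0"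
    have "(qabs (l 2))\<^sup>2 = 1" using h by (simp add: power2_eq_square)
    hence "qabs (l 2) = 1 \<or> qabs (l 2) = -1" by (simp add: power2_eq_1_iff)
    thus ?thesis using h by linarith
  qed
  hence "qN (l 2) = 1" by (simp add: qabs_qN)
  hence s: "qcnj (l 2) * l 2 = 1" by (simp add: cnj_mult one_quat_def)
  have e1: "l 1 = l 2" using cancel[OF h2 s] .
  have ej: "l j = l 2" if "j \<in> {5..n+2}" for j using uniq[OF hj[OF that, unfolded e3] s] .
  have "l i = l 1" if "i \<in> {1..2*n}" for i
  proof -
    have "i = 1 \<or> i = 2 \<or> i = 3 \<or> i = 4 \<or> i \<in> {5..n+2} \<or> i \<in> {n+3..2*n}" using that by auto
    thus ?thesis using e1 e3 e4 ej ek by auto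
  qed
  moreover have "qabs (l 1) = 1" using a2 e1 by simp
  ultimately show ?thesis by blast
qed

end
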